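(* Consider Algorithm FoBa-gdt with parameter $\epsilon>0$, and let $\beta^{(k)}$ with support $F^{(k)}$ be the iterate at the beginning of some iteration with $k\ge1$. Then for any $\bar\beta\in\mathbb{R}^d$ with support $\bar F$, $$\|\beta^{(k)}_{F^{(k)}-\bar F}\|^2=\|(\beta^{(k)}-\bar\beta)_{F^{(k)}-\bar F}\|^2\ge\frac{\delta^{(k)}}{\rho_+(1)}|F^{(k)}-\bar F|\ge\frac{\epsilon^2}{2\rho_+(1)^2}|F^{(k)}-\bar F|.$$
   Context: Let $Q:\mathbb{R}^d\to\mathbb{R}$ be convex and continuously differentiable. $e_j$ is the $j$-th standard basis vector, $\mathrm{supp}(\beta)=\{j:\beta_j\ne0\}$, $\|\beta\|_0=|\mathrm{supp}(\beta)|$, $\|\cdot\|$ is the Euclidean norm, $A-B$ is set difference, and $v_S$ is $v$ restricted to the coordinates in $S$. For $F\subseteq\{1,\dots,d\}$, $\hat\beta(F)$ denotes a minimizer of $Q$ over $\{\beta:\mathrm{supp}(\beta)\subseteq F\}$ (assumed to exist). For a positive integer $s$, the restricted strong convexity constants $\rho_-(s),\rho_+(s)>0$ are constants such that for all $\beta,\beta'\in\mathbb{R}^d$ with $\|\beta'-\beta\|_0\le s$: $\frac{\rho_-(s)}{2}\|\beta'-\beta\|^2\le Q(\beta')-Q(\beta)-\langle\nabla Q(\beta),\beta'-\beta\rangle\le\frac{\rho_+(s)}{2}\|\beta'-\beta\|^2.$ Algorithm FoBa has two variants: FoBa-obj (parameter $\delta>0$) and FoBa-gdt (parameter $\epsilon>0$).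 Initialize $F^{(0)}=\emptyset$, $\beta^{(0)}=0$, $k=0$, and repeat the following iteration. (1) Stopping test: FoBa-obj stops if $Q(\beta^{(k)})-\min_{\alpha\in\mathbb{R},\,j\notin F^{(k)}}Q(\beta^{(k)}+\alpha e_j)<\delta$; FoBa-gdt stops if $\|\nabla Q(\beta^{(k)})\|_\infty<\epsilon$. On stopping the output is $\beta^{(k)}$ with support $F^{(k)}$, and the algorithm is said to terminate at $k$. (2) Forward step: FoBa-obj picks $i^{(k)}\in\arg\min_{i\notin F^{(k)}}\min_\alpha Q(\beta^{(k)}+\alpha e_i)$; FoBa-gdt picks $i^{(k)}\in\arg\max_{i\notin F^{(k)}}|\nabla Q(\beta^{(k)})_i|$. Set $F^{(k+1)}=F^{(k)}\cup\{i^{(k)}\}$, $\beta^{(k+1)}=\hat\beta(F^{(k+1)})$, $\delta^{(k+1)}=Q(\beta^{(k)})-Q(\beta^{(k+1)})$, $k\leftarrow k+1$. (3) Backward step: repeat — if $F^{(k)}=\emptyset$ or $\min_{i\in F^{(k)}}Q(\beta^{(k)}-\beta^{(k)}_ie_i)-Q(\beta^{(k)})\ge\delta^{(k)}/2$, leave the backward step; otherwise pick $j\in\arg\min_{i\in F^{(k)}}Q(\beta^{(k)}-\beta^{(k)}_ie_i)$, set $F^{(k-1)}=F^{(k)}-\{j\}$, $\beta^{(k-1)}=\hat\beta(F^{(k-1)})$, $k\leftarrow k-1$ (where $\delta^{(k-1)}$ is the value recorded at the most recent forward step producing index $k-1$). Thus $|F^{(k)}|=k$ always. "At the beginning of an iteration"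 means the state just before a stopping test. *)

theory Defs
  imports "HOL-Analysis.Analysis"
begin

text \<open>Vectors in R^d are rendered as real^'n with 'n a finite index type (d = CARD('n)).
  The standard basis vector e_j is axis j 1.\<close>

definition supp :: "real^'n \<Rightarrow> 'n set" where
  "supp b = {j. b $ j \<noteq> 0}"

definition l0 :: "real^'n \<Rightarrow> nat" where
  "l0 b = card (supp b)"

definition restr :: "real^'n \<Rightarrow> 'n set \<Rightarrow> real^'n" where
  "restr v S = (\<chi> j. if j \<in> S then v $ j else 0)"

definition minimizes_on :: "(real^'n \<Rightarrow> real) \<Rightarrow> 'n set \<Rightarrow> real^'n \<Rightarrow> bool" where
  "minimizes_on Q F b \<longleftrightarrow> supp b \<subseteq> F \<and> (\<forall>b'. supp b' \<subseteq> F \<longrightarrow> Q b \<le> Q b')"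

text \<open>Restricted strong convexity with constants rm = rho_-(s), rp = rho_+(s).\<close>
definition rsc :: "(real^'n \<Rightarrow> real) \<Rightarrow> (real^'n \<Rightarrow> real^'n) \<Rightarrow> nat \<Rightarrow> real \<Rightarrow> real \<Rightarrow> bool" where
  "rsc Q gradQ s rm rp \<longleftrightarrow> rm > 0 \<and> rp > 0 \<and>
     (\<forall>b b'. l0 (b' - b) \<le> s \<longrightarrow>
        rm / 2 * norm (b' - b)^2 \<le> Q b' - Q b - gradQ b \<bullet> (b' - b) \<and>
        Q b' - Q b - gradQ b \<bullet> (b' - b) \<le> rp / 2 * norm (b' - b)^2)"

text \<open>A state is (F, beta, dl) where F = F^(k) (so k = card F),
  beta = beta^(k), and dl m is the value delta^(m) recorded at the most recent forward step
  producing index m. foba_begin: states at the beginning of an iteration (just before a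
  stopping test); foba_back: states inside the backward step. All choices (argmax ties,
  argmin ties, choice of minimizer beta-hat) are nondeterministic.\<close>
inductive foba_begin :: "(real^'n \<Rightarrow> real) \<Rightarrow> (real^'n \<Rightarrow> real^'n) \<Rightarrow> real
      \<Rightarrow> 'n set \<times> (real^'n) \<times> (nat \<Rightarrow> real) \<Rightarrow> bool"
  and foba_back :: "(real^'n \<Rightarrow> real) \<Rightarrow> (real^'n \<Rightarrow> real^'n) \<Rightarrow> real
      \<Rightarrow> 'n set \<times> (real^'n) \<times> (nat \<Rightarrow> real) \<Rightarrow> bool"
  for Q gradQ eps where
  init: "foba_begin Q gradQ eps ({}, 0, \<lambda>_. 0)"
| fwd: "\<lbrakk> foba_begin Q gradQ eps (F, b, dl);
          \<not> (infnorm (gradQ b) < eps);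
          i \<notin> F; \<forall>i'. i' \<notin> F \<longrightarrow> \<bar>gradQ b $ i'\<bar> \<le> \<bar>gradQ b $ i\<bar>;
          minimizes_on Q (insert i F) b' \<rbrakk>
        \<Longrightarrow> foba_back Q gradQ eps (insert i F, b', dl(card F + 1 := Q b - Q b'))"
| bwd: "\<lbrakk> foba_back Q gradQ eps (F, b, dl);
          F \<noteq> {};
          \<exists>i\<in>F. Q (b - b $ i *\<^sub>R axis i 1) - Q b < dl (card F) / 2;
          j \<in> F; \<forall>i\<in>F. Q (b - b $ j *\<^sub>R axis j 1) \<le> Q (b - b $ i *\<^sub>R axis i 1);
          minimizes_on Q (F - {j}) b' \<rbrakk>
        \<Longrightarrow> foba_back Q gradQ eps (F - {j}, b', dl)"
| leave: "\<lbrakk> foba_back Q gradQ eps (F, b, dl);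
          F = {} \<or> (\<forall>i\<in>F. Q (b - b $ i *\<^sub>R axis i 1) - Q b \<ge> dl (card F) / 2) \<rbrakk>
        \<Longrightarrow> foba_begin Q gradQ eps (F, b, dl)"

end

theory Submission
  imports Defs
begin

lemma infnorm_attain: "\<exists>j. infnorm (x::real^'n) = \<bar>x$j\<bar>"
proof -
  have "{\<bar>x$i\<bar> |i. i\<in>(UNIV::'n set)} = range (\<lambda>i. \<bar>x$i\<bar>)" by auto
  then have fin: "finite {\<bar>x$i\<bar> |i. i\<in>(UNIV::'n set)}" by simp
  have ne: "{\<bar>x$i\<bar> |i. i\<in>(UNIV::'n set)} \<noteq> {}" by auto
  have "Sup {\<bar>x$i\<bar> |i. i\<in>(UNIV::'n set)} \<in> {\<bar>x$i\<bar> |i. i\<in>(UNIV::'n set)}"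
    using Max_in[OF fin ne] cSup_eq_Max[OF fin ne] by simp
  then show ?thesis unfolding infnorm_cart by blast
qed

lemma rsc_line:
  assumes "rsc Q gradQ 1 rm rp"
  shows "Q (b + t *\<^sub>R axis i 1) - Q b \<le> t * gradQ b $ i + rp/2 * t^2"
proof -
  have s: "supp (t *\<^sub>R axis i (1::real)) \<subseteq> {i}"
    unfolding supp_def by (auto simp: axis_def)
  have "l0 ((b + t *\<^sub>R axis i 1) - b) \<le> 1"
    unfolding l0_def using card_mono[OF _ s] by simp
  with assms have e1: "Q (b + t *\<^sub>R axis i 1) - Q b - gradQ b \<bullet> ((b + t *\<^sub>R axis i 1) - b)
      \<le> rp / 2 * norm ((b + t *\<^sub>R axis i 1) - b)^2"
    unfolding rsc_def by blast
  moreover have e2: "gradQ b \<bullet> ((b + t *\<^sub>R axis i 1) - b) = t * gradQ b $ i"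
    by (simp add: inner_axis[of "gradQ b" i 1])
  moreover have e3: "norm ((b + t *\<^sub>R axis i 1) - b)^2 = t^2"
    by (simp add: power_mult_distrib)
  show ?thesis using e1 unfolding e2 e3 by simp
qed

lemma grad_zero:
  assumes r: "rsc Q gradQ 1 rm rp" and m: "minimizes_on Q F b" and i: "i \<in> F"
  shows "gradQ b $ i = 0"
proof -
  define gg where "gg = gradQ b $ i"
  define t where "t = - gg / rp"
  have rp: "rp > 0" using r unfolding rsc_def by simp
  have "supp (b + t *\<^sub>R axis i 1) \<subseteq> F"
    using m i unfolding minimizes_on_def supp_def by (auto simp: axis_def)
  then have "Q b \<le> Q (b + t *\<^sub>R axis i 1)" using m unfolding minimizes_on_def by blast
  with rsc_line[OF r, of b t i] have "0 \<le> t * gg + rp/2 * t^2" unfolding gg_def by simp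
  also have "t * gg + rp/2 * t^2 = -(gg^2) / (2*rp)" unfolding t_def using rp
    by (simp add: field_simps power2_eq_square)
  finally have "0 \<le> -(gg^2) / (2*rp)" .
  then have "gg^2 \<le> 0" using rp by (simp add: field_simps)
  then show ?thesis unfolding gg_def by simp
qed

lemma invariant:
  fixes Q :: "real^'n \<Rightarrow> real" and gradQ :: "real^'n \<Rightarrow> real^'n" and eps rp :: real
  assumes r: "rsc Q gradQ 1 rm rp" and ep: "eps > 0"
  shows "foba_begin Q gradQ eps st \<Longrightarrow> (case st of (F, b, dl) \<Rightarrow>
           minimizes_on Q F b \<and> (\<forall>m. 1 \<le> m \<and> m \<le> card F \<longrightarrow> dl m \<ge> eps^2 / (2*rp)))"
    and "foba_back Q gradQ eps st \<Longrightarrow> (case st of (F, b, dl) \<Rightarrow>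
           minimizes_on Q F b \<and> (\<forall>m. 1 \<le> m \<and> m \<le> card F \<longrightarrow> dl m \<ge> eps^2 / (2*rp)))"
proof (induction rule: foba_begin_foba_back.inducts)
  case init
  have "\<And>b'::real^'n. supp b' \<subseteq> {} \<Longrightarrow> b' = 0" unfolding supp_def by (auto simp: vec_eq_iff)
  then show ?case unfolding minimizes_on_def by (auto simp: supp_def)
next
  case (fwd F b dl i b')
  have rp: "rp > 0" using r unfolding rsc_def by simp
  have mF: "minimizes_on Q F b" using fwd(2) by simp
  have h2: "\<not> (infnorm (gradQ b) < eps)" by (rule fwd(3))
  have h3: "i \<notin> F" by (rule fwd(6))
  have h4: "\<forall>i'. i' \<notin> F \<longrightarrow> \<bar>gradQ b $ i'\<bar> \<le> \<bar>gradQ b $ i\<bar>" by (rule fwd(4))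
  have h5: "minimizes_on Q (insert i F) b'" by (rule fwd(5))
  obtain j where j: "infnorm (gradQ b) = \<bar>gradQ b $ j\<bar>" using infnorm_attain by blast
  have "\<bar>gradQ b $ j\<bar> \<ge> eps" using h2 j by simp
  then have "j \<notin> F" using grad_zero[OF r mF, of j] ep by auto
  then have ge: "\<bar>gradQ b $ i\<bar> \<ge> eps" using h4 \<open>\<bar>gradQ b $ j\<bar> \<ge> eps\<close> by force
  define gg where "gg = gradQ b $ i"
  define t where "t = - gg / rp"
  have "supp (b + t *\<^sub>R axis i 1) \<subseteq> insert i F"
    using mF unfolding minimizes_on_def supp_def by (auto simp: axis_def)
  then have "Q b' \<le> Q (b + t *\<^sub>R axis i 1)" using h5 unfolding minimizes_on_def by blast
  with rsc_line[OF r, of b t i] have "Q b' - Q b \<le> t * gg + rp/2 * t^2" unfolding gg_def by simp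
  also have "t * gg + rp/2 * t^2 = -(gg^2) / (2*rp)" unfolding t_def using rp
    by (simp add: field_simps power2_eq_square)
  finally have A: "Q b - Q b' \<ge> gg^2 / (2*rp)" by simp
  have "eps^2 \<le> gg^2" using ge unfolding gg_def
    by (metis power2_abs power_mono less_imp_le ep)
  then have "eps^2 / (2*rp) \<le> gg^2 / (2*rp)" using rp by (simp add: divide_right_mono)
  with A have new: "Q b - Q b' \<ge> eps^2 / (2*rp)" by linarith
  have fin: "finite F" by simp
  have cF: "card (insert i F) = card F + 1" using h3 fin by simp
  show ?case using fwd(2) h5 new cF
    by (auto simp: le_Suc_eq)
next
  case (bwd F b dl j b')
  have fin: "finite F" by simp
  have "card (F - {j}) \<le> card F" using fin by (simp add: card_mono)
  moreover have "minimizes_on Q (F - {j}) b'" using bwd by meson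
  ultimately show ?case using bwd(2) by auto
next
  case (leave F b dl)
  then show ?case by simp
qed

theorem mainTheorem12:
  fixes Q :: "real^'n \<Rightarrow> real" and gradQ :: "real^'n \<Rightarrow> real^'n"
    and eps rm rp :: real and F :: "'n set" and b bbar :: "real^'n" and dl :: "nat \<Rightarrow> real"
  assumes convex: "convex_on UNIV Q"
    and grad: "\<And>x. (Q has_derivative (\<lambda>h. gradQ x \<bullet> h)) (at x)"
    and grad_cont: "continuous_on UNIV gradQ"
    and minex: "\<And>G. \<exists>x. minimizes_on Q G x"
    and rsc1: "rsc Q gradQ 1 rm rp"
    and eps_pos: "eps > 0"
    and state: "foba_begin Q gradQ eps (F, b, dl)"
    and k_pos: "card F \<ge> 1"
  shows "norm (restr b (F - supp bbar))^2 = norm (restr (b - bbar) (F - supp bbar))^2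
       \<and> norm (restr (b - bbar) (F - supp bbar))^2 \<ge> dl (card F) / rp * real (card (F - supp bbar))
       \<and> dl (card F) / rp * real (card (F - supp bbar)) \<ge> eps^2 / (2 * rp^2) * real (card (F - supp bbar))"
proof -
  have rp: "rp > 0" using rsc1 unfolding rsc_def by simp
  have inv: "minimizes_on Q F b" "\<And>m. 1 \<le> m \<Longrightarrow> m \<le> card F \<Longrightarrow> dl m \<ge> eps^2 / (2*rp)"
    using invariant(1)[OF rsc1 eps_pos state] by auto
  define S where "S = F - supp bbar"
  have eq: "restr b S = restr (b - bbar) S"
    unfolding restr_def S_def supp_def by (auto simp: vec_eq_iff)
  have Fne: "F \<noteq> {}" using k_pos by auto
  have bk: "\<forall>i\<in>F. Q (b - b $ i *\<^sub>R axis i 1) - Q b \<ge> dl (card F) / 2"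
    using state Fne by (cases rule: foba_begin.cases) auto
  have eachF: "b $ i ^ 2 \<ge> dl (card F) / rp" if i: "i \<in> F" for i
  proof -
    have "Q (b + (- b $ i) *\<^sub>R axis i 1) - Q b \<le> (- b$i) * gradQ b $ i + rp/2 * (- b$i)^2"
      by (rule rsc_line[OF rsc1])
    then have "Q (b - b $ i *\<^sub>R axis i 1) - Q b \<le> rp/2 * (b$i)^2"
      using grad_zero[OF rsc1 inv(1) i] by simp
    with bk i have "dl (card F) / 2 \<le> rp/2 * (b$i)^2" by force
    then show ?thesis using rp by (simp add: field_simps)
  qed
  have nsq: "norm (restr b S)^2 = (\<Sum>j\<in>S. b$j^2)"
  proof -
    have "norm (restr b S)^2 = (\<Sum>j\<in>UNIV. (restr b S $ j)^2)"
      unfolding power2_norm_eq_inner inner_vec_def by (simp add: power2_eq_square)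
    also have "\<dots> = (\<Sum>j\<in>UNIV. if j \<in> S then b$j^2 else 0)"
      unfolding restr_def by (intro sum.cong) auto
    also have "\<dots> = (\<Sum>j\<in>S. b$j^2)" by (simp add: sum.If_cases)
    finally show ?thesis .
  qed
  have "(\<Sum>j\<in>S. b$j^2) \<ge> (\<Sum>j\<in>S. dl (card F) / rp)"
    by (rule sum_mono) (use eachF S_def in auto)
  then have P2: "norm (restr b S)^2 \<ge> dl (card F) / rp * real (card S)"
    using nsq by (simp add: mult.commute)
  have "dl (card F) \<ge> eps^2 / (2*rp)" using inv(2)[OF k_pos] by simp
  then have "dl (card F) / rp \<ge> eps^2 / (2*rp^2)" using rp
    by (simp add: field_simps power2_eq_square)
  then have P3: "dl (card F) / rp * real (card S) \<ge> eps^2 / (2*rp^2) * real (card S)"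
    by (rule mult_right_mono) simp
  show ?thesis using eq P2 P3 unfolding S_def by simp
qed

end
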